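(* Let $K,G,m_0,A_g,B_g,\bar f_c,\bar f_t>0$, $e\in[0.5,1]$, and let $m_g(p)=A_gB_g\bar f_c\,e^{\frac{p-\bar f_t/3}{B_g\bar f_c}}$, so $m_g'(p)=A_g e^{\frac{p-\bar f_t/3}{B_g\bar f_c}}$. Let $\hat f(p,\varrho,\varrho_e)=\frac32\left(\frac{\varrho}{\bar f_c}\right)^2+m_0\left(\frac{\varrho_e}{\sqrt6\bar f_c}+\frac{p}{\bar f_c}\right)-1$. Let $\boldsymbol\sigma^{tr}\in\mathbb R^{3\times3}_{sym}$ be given with $p^{tr}=p(\boldsymbol\sigma^{tr})$, $\mathbf s^{tr}=\mathbf s(\boldsymbol\sigma^{tr})$, $\varrho^{tr}=\|\mathbf s^{tr}\|$, $\mathbf n^{tr}=\mathbf s^{tr}/\varrho^{tr}$, $\theta^{tr}=\theta(\boldsymbol\sigma^{tr})$, $r_e^{tr}=r_e(\cos\theta^{tr})$, $\varrho_e^{tr}=\varrho_e(\boldsymbol\sigma^{tr})$, and assume $\hat f(p^{tr},\varrho^{tr},\varrho_e^{tr})>0$. Consider the problem (P): find $\boldsymbol\sigma\in\mathbb R^{3\times3}_{sym}$ and $\triangle\lambda$ with $$\boldsymbol\sigma=\boldsymbol\sigma^{tr}-\triangle\lambda\Big[K\tfrac{m_g'(p(\boldsymbol\sigma))}{\bar f_c}\mathbf I+2G\Big(\tfrac{3\varrho(\boldsymbol\sigma)}{\bar f_c^2}+\tfrac{m_0}{\sqrt6\bar f_c}\Big)\hat{\mathbf n}\Big]\ \text{for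 some }\hat{\mathbf n}\in\partial\varrho(\boldsymbol\sigma),$$ $\triangle\lambda\ge0$, $\hat f(p(\boldsymbol\sigma),\varrho(\boldsymbol\sigma),\varrho_e(\boldsymbol\sigma))\le0$, $\triangle\lambda\hat f(p(\boldsymbol\sigma),\varrho(\boldsymbol\sigma),\varrho_e(\boldsymbol\sigma))=0$. If $(\boldsymbol\sigma,\triangle\lambda)$ solves (P) and $p=p(\boldsymbol\sigma)$, $\varrho=\varrho(\boldsymbol\sigma)$, then $(p,\varrho,\triangle\lambda)$ solves the system (R): $$p=p^{tr}-\triangle\lambda K\tfrac{m_g'(p)}{\bar f_c},\quad \varrho=\Big[\varrho^{tr}-\triangle\lambda 2G\Big(\tfrac{3\varrho}{\bar f_c^2}+\tfrac{m_0}{\sqrt6\bar f_c}\Big)\Big]^+,\quad \hat f(p,\varrho,\varrho r_e^{tr})=0.$$ Conversely, if $(p,\varrho,\triangle\lambda)$ solves (R), then $(\boldsymbol\sigma,\triangle\lambda)$ solves (P), where $\boldsymbol\sigma=p\mathbf I+\varrho\mathbf n^{tr}$ if $\varrho^{tr}>\triangle\lambda2G\big(\frac{3\varrho}{\bar f_c^2}+\frac{m_0}{\sqrt6\bar f_c}\big)$ and $\boldsymbol\sigma=p\mathbf I$ otherwise.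
   Context: $\mathbb R^{3\times3}_{sym}$: real symmetric $3\times3$ matrices with Frobenius product ":" and norm; $\mathbf I$ identity; $p(\boldsymbol\sigma)=\frac13\mathbf I:\boldsymbol\sigma$, $\mathbf s(\boldsymbol\sigma)=\boldsymbol\sigma-p(\boldsymbol\sigma)\mathbf I$, $\varrho(\boldsymbol\sigma)=\|\mathbf s(\boldsymbol\sigma)\|$; for $\varrho(\boldsymbol\sigma)>0$, $\theta(\boldsymbol\sigma)=\frac13\arccos\big(\frac{3\sqrt3}{2}J_3/J_2^{3/2}\big)$ with $J_2=\frac12\mathbf s:\mathbf s$, $J_3=\frac13\mathbf s^3:\mathbf I$. $r_e(\cos\theta)=\frac{4(1-e^2)\cos^2\theta+(2e-1)^2}{2(1-e^2)\cos\theta+(2e-1)\sqrt{4(1-e^2)\cos^2\theta+5e^2-4e}}$; $\varrho_e(\boldsymbol\sigma)=\varrho(\boldsymbol\sigma)r_e(\cos\theta(\boldsymbol\sigma))$ if $\varrho(\boldsymbol\sigma)>0$ and $0$ otherwise. When $\varrho^{tr}=0$ the quantity $\varrho r_e^{tr}$ is interpreted as $0$. $(x)^+=\max\{0,x\}$. $\partial\varrho(\boldsymbol\sigma)=\{\mathbf s(\boldsymbol\sigma)/\varrho(\boldsymbol\sigma)\}$ if $\varrho(\boldsymbol\sigma)>0$, and $\{\hat{\mathbf n}\in\mathbb R^{3\times3}_{sym}:\mathbf I:\hat{\mathbf n}=0,\|\hat{\mathbf n}\|\le1\}$ if $\varrho(\boldsymbol\sigma)=0$. *)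

theory Defs
  imports "HOL-Analysis.Analysis"
begin

text \<open>Real 3x3 matrices; the Frobenius product is the inner product on real^3^3
  and the Frobenius norm is norm.  Symmetric matrices: transpose A = A.\<close>

type_synonym mat3 = "real^3^3"

definition sym3 :: "mat3 \<Rightarrow> bool" where
  "sym3 A \<longleftrightarrow> transpose A = A"

definition Id3 :: mat3 where "Id3 = mat 1"

definition pr :: "mat3 \<Rightarrow> real" where
  "pr \<sigma> = (Id3 \<bullet> \<sigma>) / 3"

definition dev :: "mat3 \<Rightarrow> mat3" where
  "dev \<sigma> = \<sigma> - pr \<sigma> *\<^sub>R Id3"

definition rho :: "mat3 \<Rightarrow> real" where
  "rho \<sigma> = norm (dev \<sigma>)"

definition J2 :: "mat3 \<Rightarrow> real" where
  "J2 \<sigma> = (dev \<sigma> \<bullet> dev \<sigma>) / 2"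

definition J3 :: "mat3 \<Rightarrow> real" where
  "J3 \<sigma> = ((dev \<sigma> ** dev \<sigma> ** dev \<sigma>) \<bullet> Id3) / 3"

definition theta :: "mat3 \<Rightarrow> real" where
  "theta \<sigma> = arccos (3 * sqrt 3 / 2 * J3 \<sigma> / (J2 \<sigma> powr (3/2))) / 3"

definition r_e :: "real \<Rightarrow> real \<Rightarrow> real" where
  "r_e e c = (4 * (1 - e\<^sup>2) * c\<^sup>2 + (2*e - 1)\<^sup>2) /
     (2 * (1 - e\<^sup>2) * c + (2*e - 1) * sqrt (4 * (1 - e\<^sup>2) * c\<^sup>2 + 5 * e\<^sup>2 - 4 * e))"

definition rho_e :: "real \<Rightarrow> mat3 \<Rightarrow> real" where
  "rho_e e \<sigma> = (if rho \<sigma> > 0 then rho \<sigma> * r_e e (cos (theta \<sigma>)) else 0)"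

definition subdiff_rho :: "mat3 \<Rightarrow> mat3 set" where
  "subdiff_rho \<sigma> = (if rho \<sigma> > 0 then {dev \<sigma> /\<^sub>R rho \<sigma>}
      else {n. sym3 n \<and> Id3 \<bullet> n = 0 \<and> norm n \<le> 1})"

definition pos_part :: "real \<Rightarrow> real" where
  "pos_part x = max 0 x"

definition mg' :: "real \<Rightarrow> real \<Rightarrow> real \<Rightarrow> real \<Rightarrow> real \<Rightarrow> real" where
  "mg' Ag Bg fc ft p = Ag * exp ((p - ft / 3) / (Bg * fc))"

definition fhat :: "real \<Rightarrow> real \<Rightarrow> real \<Rightarrow> real \<Rightarrow> real \<Rightarrow> real" where
  "fhat m0 fc p r re = 3/2 * (r / fc)\<^sup>2 + m0 * (re / (sqrt 6 * fc) + p / fc) - 1"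

definition probP ::
  "real \<Rightarrow> real \<Rightarrow> real \<Rightarrow> real \<Rightarrow> real \<Rightarrow> real \<Rightarrow> real \<Rightarrow> real \<Rightarrow> mat3 \<Rightarrow> mat3 \<Rightarrow> real \<Rightarrow> bool" where
  "probP K G m0 Ag Bg fc ft e \<sigma>tr \<sigma> dl \<longleftrightarrow>
     sym3 \<sigma> \<and>
     (\<exists>n \<in> subdiff_rho \<sigma>.
        \<sigma> = \<sigma>tr - dl *\<^sub>R (K * mg' Ag Bg fc ft (pr \<sigma>) / fc) *\<^sub>R Id3
               - dl *\<^sub>R (2 * G * (3 * rho \<sigma> / fc\<^sup>2 + m0 / (sqrt 6 * fc))) *\<^sub>R n) \<and>
     dl \<ge> 0 \<and>
     fhat m0 fc (pr \<sigma>) (rho \<sigma>) (rho_e e \<sigma>) \<le> 0 \<and>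
     dl * fhat m0 fc (pr \<sigma>) (rho \<sigma>) (rho_e e \<sigma>) = 0"

text \<open>System (R); the term rho * r_e^tr is read as 0 when rho^tr = 0.\<close>
definition sysR ::
  "real \<Rightarrow> real \<Rightarrow> real \<Rightarrow> real \<Rightarrow> real \<Rightarrow> real \<Rightarrow> real \<Rightarrow> real \<Rightarrow> mat3 \<Rightarrow> real \<Rightarrow> real \<Rightarrow> real \<Rightarrow> bool" where
  "sysR K G m0 Ag Bg fc ft e \<sigma>tr p r dl \<longleftrightarrow>
     p = pr \<sigma>tr - dl * K * mg' Ag Bg fc ft p / fc \<and>
     r = pos_part (rho \<sigma>tr - dl * 2 * G * (3 * r / fc\<^sup>2 + m0 / (sqrt 6 * fc))) \<and>
     fhat m0 fc p r (if rho \<sigma>tr > 0 then r * r_e e (cos (theta \<sigma>tr)) else 0) = 0"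

end

theory Submission imports Defs begin
lemma inner_m3: "(A::mat3) \<bullet> B = A$1$1*B$1$1 + A$1$2*B$1$2 + A$1$3*B$1$3 + A$2$1*B$2$1 + A$2$2*B$2$2 + A$2$3*B$2$3 + A$3$1*B$3$1 + A$3$2*B$3$2 + A$3$3*B$3$3"
  by (simp add: inner_vec_def sum_3 add.assoc)
lemma mm3: "((A::mat3)**B)$i$j = A$i$1*B$1$j + A$i$2*B$2$j + A$i$3*B$3$j"
  by (simp add: matrix_matrix_mult_def sum_3)
lemma id3c: "Id3$i$j = (if i = j then 1 else 0)" by (simp add: Id3_def mat_def)
lemma sym3_comp: assumes "sym3 s" shows "s$i$j = s$j$i"
proof -
  have "transpose s $ i $ j = s $ i $ j" using assms by (simp add: sym3_def)
  then show ?thesis by (simp add: transpose_def)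
qed
lemma id3v: "Id3$1$1 = 1" "Id3$2$2 = 1" "Id3$3$3 = 1" "Id3$1$2 = 0" "Id3$1$3 = 0" "Id3$2$1 = 0" "Id3$2$3 = 0" "Id3$3$1 = 0" "Id3$3$2 = 0"
  by (simp_all add: id3c)

lemma kf1: fixes s :: mat3
  assumes a: "s$2$1 = s$1$2" "s$3$1 = s$1$3" "s$3$2 = s$2$3"
  shows "(s**s) \<bullet> Id3 = s \<bullet> s"
  unfolding inner_m3 mm3 id3v a
  by (simp add: algebra_simps)
lemma kf2: fixes s :: mat3
  assumes a: "s$2$1 = s$1$2" "s$3$1 = s$1$3" "s$3$2 = s$2$3"
  shows "(s**s) \<bullet> s = (s**s**s) \<bullet> Id3"
  unfolding inner_m3 mm3 id3v a
  by (simp add: algebra_simps)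
lemma kf3: fixes s :: mat3
  assumes a: "s$2$1 = s$1$2" "s$3$1 = s$1$3" "s$3$2 = s$2$3" and t: "s$3$3 = - s$1$1 - s$2$2"
  shows "2 * ((s**s) \<bullet> (s**s)) = (s \<bullet> s)^2"
  unfolding inner_m3 mm3 a t
  by (simp add: algebra_simps power2_eq_square)

lemma keyfacts:
  fixes s :: mat3
  assumes sy: "sym3 s" and tr: "Id3 \<bullet> s = 0"
  shows "(s**s) \<bullet> Id3 = s \<bullet> s" "(s**s) \<bullet> s = (s**s**s) \<bullet> Id3"
     "2 * ((s**s) \<bullet> (s**s)) = (s \<bullet> s)^2"
proof -
  have t: "s$3$3 = - s$1$1 - s$2$2" using tr
    by (simp add: inner_m3 id3v)
  have a: "s$2$1 = s$1$2" "s$3$1 = s$1$3" "s$3$2 = s$2$3" by (rule sym3_comp[OF sy])+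
  show "(s**s) \<bullet> Id3 = s \<bullet> s" by (rule kf1[OF a])
  show "(s**s) \<bullet> s = (s**s**s) \<bullet> Id3" by (rule kf2[OF a])
  show  "2 * ((s**s) \<bullet> (s**s)) = (s \<bullet> s)^2" by (rule kf3[OF a t])
qed

lemma Id3_Id3: "Id3 \<bullet> Id3 = 3" by (simp add: inner_m3 id3c)
lemma pr_Id3[simp]: "pr Id3 = 1" by (simp add: pr_def Id3_Id3)
lemma pr_add: "pr (x + y) = pr x + pr y" by (simp add: pr_def inner_add_right add_divide_distrib)
lemma pr_diff: "pr (x - y) = pr x - pr y" by (simp add: pr_def inner_diff_right diff_divide_distrib)
lemma pr_scale: "pr (c *\<^sub>R x) = c * pr x" by (simp add: pr_def)
lemma tr_dev: "Id3 \<bullet> dev x = 0" by (simp add: dev_def pr_def inner_diff_right Id3_Id3)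
lemma pr_dev[simp]: "pr (dev x) = 0" by (simp add: pr_def tr_dev)
lemma dev_add: "dev (x + y) = dev x + dev y" by (simp add: dev_def pr_add scaleR_add_left)
lemma dev_diff: "dev (x - y) = dev x - dev y" by (simp add: dev_def pr_diff scaleR_diff_left)
lemma dev_scale: "dev (c *\<^sub>R x) = c *\<^sub>R dev x" by (simp add: dev_def pr_scale scaleR_diff_right)
lemma dev_Id3[simp]: "dev Id3 = 0" by (simp add: dev_def)
lemma dev_tr0: "Id3 \<bullet> n = 0 \<Longrightarrow> dev n = n" by (simp add: dev_def pr_def)
lemma dev_dev[simp]: "dev (dev x) = dev x" by (rule dev_tr0[OF tr_dev])
lemma decomp: "x = pr x *\<^sub>R Id3 + dev x" by (simp add: dev_def)
lemma sym3_add: "sym3 x \<Longrightarrow> sym3 y \<Longrightarrow> sym3 (x + y)"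
  by (simp add: sym3_def transpose_def vec_eq_iff)
lemma sym3_scale: "sym3 x \<Longrightarrow> sym3 (c *\<^sub>R x)"
  by (simp add: sym3_def transpose_scalar)
lemma sym3_diff: "sym3 x \<Longrightarrow> sym3 y \<Longrightarrow> sym3 (x - y)"
  using sym3_add[of x "(-1) *\<^sub>R y"] sym3_scale[of y "-1"] by simp
lemma sym3_Id3: "sym3 Id3" by (simp add: sym3_def Id3_def)
lemma sym3_dev: "sym3 x \<Longrightarrow> sym3 (dev x)" unfolding dev_def
  by (intro sym3_diff sym3_scale sym3_Id3)
lemma rho_nonneg: "rho x \<ge> 0" by (simp add: rho_def)

lemma cube_scale: "(c *\<^sub>R A) ** (c *\<^sub>R A) ** (c *\<^sub>R A) = (c^3) *\<^sub>R ((A::mat3) ** A ** A)"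
  by (simp add: scalar_matrix_assoc[symmetric] matrix_scalar_ac power3_eq_cube)

lemma re_nonneg_aux:
  assumes "1/2 \<le> e" "e \<le> 1" "1/2 \<le> c"
  shows "r_e e c \<ge> 0"
proof -
  have e1: "1 - e^2 \<ge> 0" using assms by (simp add: power_le_one)
  have "(1/2)^2 \<le> c^2" by (rule power_mono) (use assms in auto)
  then have c2: "c^2 \<ge> 1/4" by (simp add: power2_eq_square)
  have "(1 - e^2) * (1/4) \<le> (1 - e^2) * c^2" using mult_left_mono[OF c2 e1] .
  then have q: "1 - e^2 \<le> 4 * ((1 - e^2) * c^2)" by simp
  have id: "4 * (1 - e\<^sup>2) * c\<^sup>2 + 5 * e\<^sup>2 - 4 * e - (2*e-1)^2 = 4 * ((1 - e^2) * c^2) - (1 - e^2)"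
    by (simp add: algebra_simps power2_eq_square)
  have "4 * (1 - e\<^sup>2) * c\<^sup>2 + 5 * e\<^sup>2 - 4 * e \<ge> (2*e-1)^2"
    using q id by linarith
  then have "0 \<le> 4 * (1 - e\<^sup>2) * c\<^sup>2 + 5 * e\<^sup>2 - 4 * e"
    using zero_le_power2[of "2*e-1"] by linarith
  then have "sqrt (4 * (1 - e\<^sup>2) * c\<^sup>2 + 5 * e\<^sup>2 - 4 * e) \<ge> 0" by simp
  moreover have "2*e - 1 \<ge> 0" using assms by simp
  moreover have "2 * (1 - e\<^sup>2) * c \<ge> 0" using e1 assms by simp
  moreover have "c \<ge> 0" using assms by simp
  ultimately show ?thesis unfolding r_e_def using e1
    by (intro divide_nonneg_nonneg add_nonneg_nonneg mult_nonneg_nonneg) auto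
qed

lemma theta_scale:
  assumes "dev s = c *\<^sub>R dev t" "c > 0"
  shows "theta s = theta t"
proof -
  have j2: "J2 s = c^2 * J2 t" using assms by (simp add: J2_def power2_eq_square)
  have j3: "J3 s = c^3 * J3 t" using assms
    by (simp add: J3_def cube_scale)
  have jt: "J2 t \<ge> 0" by (simp add: J2_def)
  have c2: "c^2 = c powr 2" using powr_realpow[of c 2] assms(2) by simp
  have c3: "(c^2) powr (3/2) = c^3"
  proof -
    have "(c^2) powr (3/2) = (c powr 2) powr (3/2)" by (simp only: c2)
    also have "\<dots> = c powr (2 * (3/2))" by (rule powr_powr)
    also have "\<dots> = c powr 3" by simp
    also have "\<dots> = c^3" using powr_realpow[of c 3] assms(2) by simp
    finally show ?thesis .
  qed
  have p: "J2 s powr (3/2) = c^3 * J2 t powr (3/2)"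
    unfolding j2 using jt assms(2) by (simp add: powr_mult c3)
  have "3 * sqrt 3 / 2 * J3 s / J2 s powr (3/2) = 3 * sqrt 3 / 2 * J3 t / J2 t powr (3/2)"
    unfolding j3 p using assms(2) by simp
  then show ?thesis unfolding theta_def by simp
qed

lemma arg_bound:
  assumes sg: "sym3 \<sigma>" and rp: "rho \<sigma> > 0"
  shows "\<bar>3 * sqrt 3 / 2 * J3 \<sigma> / J2 \<sigma> powr (3/2)\<bar> \<le> 1"
proof -
  define s where "s = dev \<sigma>"
  define w where "w = s ** s"
  have sy: "sym3 s" unfolding s_def using sg by (rule sym3_dev)
  have tr: "Id3 \<bullet> s = 0" unfolding s_def by (rule tr_dev)
  note k = keyfacts[OF sy tr]
  define N where "N = s \<bullet> s"
  define x where "x = w \<bullet> s"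
  have N: "N = (rho \<sigma>)^2" unfolding N_def rho_def s_def by (simp add: power2_norm_eq_inner)
  have Npos: "N > 0" unfolding N using rp by simp
  have J2e: "J2 \<sigma> = N/2" unfolding J2_def N_def s_def ..
  have "(s**s**s) \<bullet> Id3 = x" using k(2) unfolding x_def w_def by simp
  then have J3e: "J3 \<sigma> = x/3" unfolding J3_def s_def by simp
  have ww: "w \<bullet> w = N^2/2" using k(3) unfolding N_def w_def by simp
  have wI: "w \<bullet> Id3 = N" using k(1) unfolding N_def w_def .
  have "0 \<le> (w - (N/3) *\<^sub>R Id3 - (x/N) *\<^sub>R s) \<bullet> (w - (N/3) *\<^sub>R Id3 - (x/N) *\<^sub>R s)" by simp
  also have "\<dots> = w\<bullet>w - 2*(N/3)*(w\<bullet>Id3) - 2*(x/N)*(w\<bullet>s) + (N/3)^2*(Id3\<bullet>Id3) + 2*(N/3)*(x/N)*(Id3\<bullet>s) + (x/N)^2*(s\<bullet>s)"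
    by (simp add: inner_diff_left inner_diff_right inner_commute algebra_simps power2_eq_square)
  also have "\<dots> = N^2/6 - x^2/N"
    using Npos unfolding ww wI tr Id3_Id3 x_def[symmetric] N_def[symmetric]
    by (simp add: field_simps power2_eq_square)
  finally have "x^2/N \<le> N^2/6" by simp
  then have xb: "6 * x^2 \<le> N^3" using Npos by (simp add: field_simps power2_eq_square power3_eq_cube)
  define D where "D = (N/2) powr (3/2)"
  have Dpos: "D > 0" unfolding D_def using Npos by simp
  have D2: "D^2 = (N/2)^3"
  proof -
    have h: "N/2 \<noteq> 0" using Npos by simp
    have "D^2 = (N/2) powr (of_nat 2 * (3/2))" unfolding D_def by (rule powr_power[OF h])
    also have "\<dots> = (N/2) powr (real 3)" by simp
    also have "\<dots> = (N/2)^3" by (rule powr_realpow) (use Npos in simp)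
    finally show ?thesis .
  qed
  have "(3 * sqrt 3 / 2 * J3 \<sigma> / J2 \<sigma> powr (3/2))^2 = 3/4 * x^2 / D^2"
    unfolding J2e J3e D_def[symmetric] by (simp add: power_divide power_mult_distrib)
  also have "\<dots> = 6 * x^2 / N^3" unfolding D2 using Npos by (simp add: field_simps)
  also have "\<dots> \<le> 1" using xb Npos by simp
  finally have sq: "(3 * sqrt 3 / 2 * J3 \<sigma> / J2 \<sigma> powr (3/2))^2 \<le> 1" .
  have "\<bar>3 * sqrt 3 / 2 * J3 \<sigma> / J2 \<sigma> powr (3/2)\<bar> \<le> \<bar>1\<bar>"
    unfolding abs_le_square_iff using sq by simp
  then show ?thesis by simp
qed

lemma cos_theta_ge:
  assumes "sym3 \<sigma>" "rho \<sigma> > 0"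
  shows "cos (theta \<sigma>) \<ge> 1/2"
proof -
  define y where "y = 3 * sqrt 3 / 2 * J3 \<sigma> / J2 \<sigma> powr (3/2)"
  have "\<bar>y\<bar> \<le> 1" unfolding y_def by (rule arg_bound[OF assms])
  then have y: "-1 \<le> y" "y \<le> 1" by auto
  have th: "theta \<sigma> = arccos y / 3" unfolding theta_def y_def ..
  have "0 \<le> theta \<sigma>" "theta \<sigma> \<le> pi/3" unfolding th using arccos_lbound[OF y] arccos_ubound[OF y] by auto
  then have "cos (pi/3) \<le> cos (theta \<sigma>)" by (intro cos_monotone_0_pi_le) auto
  then show ?thesis by (simp add: cos_60)
qed

lemma re_tr_nonneg:
  assumes "sym3 \<sigma>" "rho \<sigma> > 0" "1/2 \<le> e" "e \<le> 1"
  shows "r_e e (cos (theta \<sigma>)) \<ge> 0"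
  using re_nonneg_aux[OF assms(3,4) cos_theta_ge[OF assms(1,2)]] .

theorem theorem5:
  fixes K G m0 Ag Bg fc ft e :: real and \<sigma>tr :: mat3
  assumes "K > 0" "G > 0" "m0 > 0" "Ag > 0" "Bg > 0" "fc > 0" "ft > 0"
    and "1/2 \<le> e" "e \<le> 1"
    and "sym3 \<sigma>tr"
    and "fhat m0 fc (pr \<sigma>tr) (rho \<sigma>tr) (rho_e e \<sigma>tr) > 0"
  shows "(\<forall>\<sigma> dl. probP K G m0 Ag Bg fc ft e \<sigma>tr \<sigma> dl \<longrightarrow>
             sysR K G m0 Ag Bg fc ft e \<sigma>tr (pr \<sigma>) (rho \<sigma>) dl)
       \<and> (\<forall>p r dl. sysR K G m0 Ag Bg fc ft e \<sigma>tr p r dl \<longrightarrow>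
             probP K G m0 Ag Bg fc ft e \<sigma>tr
               (if rho \<sigma>tr > dl * 2 * G * (3 * r / fc\<^sup>2 + m0 / (sqrt 6 * fc))
                then p *\<^sub>R Id3 + r *\<^sub>R (dev \<sigma>tr /\<^sub>R rho \<sigma>tr)
                else p *\<^sub>R Id3) dl)"
proof -
  define b where "b = (\<lambda>r. 2 * G * (3 * r / fc\<^sup>2 + m0 / (sqrt 6 * fc)))"
  have bpos: "b r > 0" if "r \<ge> 0" for r
  proof -
    have "3 * r / fc\<^sup>2 \<ge> 0" using that by simp
    moreover have "m0 / (sqrt 6 * fc) > 0" using assms(3,6) by simp
    ultimately show ?thesis unfolding b_def using assms(2) by simp
  qed
  have mgpos: "mg' Ag Bg fc ft q > 0" for q using assms(4) by (simp add: mg'_def)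
  note ftr = assms(11)
  have fc: "fc > 0" by (rule assms(6))
  have P1: "\<forall>\<sigma> dl. probP K G m0 Ag Bg fc ft e \<sigma>tr \<sigma> dl \<longrightarrow>
             sysR K G m0 Ag Bg fc ft e \<sigma>tr (pr \<sigma>) (rho \<sigma>) dl"
  proof (intro allI impI)
    fix \<sigma> dl assume P: "probP K G m0 Ag Bg fc ft e \<sigma>tr \<sigma> dl"
    then obtain n where n: "n \<in> subdiff_rho \<sigma>"
      and eq: "\<sigma> = \<sigma>tr - dl *\<^sub>R (K * mg' Ag Bg fc ft (pr \<sigma>) / fc) *\<^sub>R Id3
               - dl *\<^sub>R (2 * G * (3 * rho \<sigma> / fc\<^sup>2 + m0 / (sqrt 6 * fc))) *\<^sub>R n"
      and dl0: "dl \<ge> 0" and fle: "fhat m0 fc (pr \<sigma>) (rho \<sigma>) (rho_e e \<sigma>) \<le> 0"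
      and fdl: "dl * fhat m0 fc (pr \<sigma>) (rho \<sigma>) (rho_e e \<sigma>) = 0"
      unfolding probP_def by blast
    define A where "A = K * mg' Ag Bg fc ft (pr \<sigma>) / fc"
    define B where "B = b (rho \<sigma>)"
    have Bpos: "B > 0" using bpos rho_nonneg B_def by auto
    have eq2: "\<sigma> = \<sigma>tr - (dl*A) *\<^sub>R Id3 - (dl*B) *\<^sub>R n" using eq unfolding A_def B_def b_def by simp
    have trn: "Id3 \<bullet> n = 0"
    proof (cases "rho \<sigma> > 0")
      case True then have "n = dev \<sigma> /\<^sub>R rho \<sigma>" using n by (simp add: subdiff_rho_def)
      then show ?thesis by (simp add: tr_dev)
    next
      case False then show ?thesis using n by (simp add: subdiff_rho_def)
    qed
    have prn: "pr n = 0" using trn by (simp add: pr_def)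
    have prs: "pr \<sigma> = pr \<sigma>tr - dl*A"
      using arg_cong[OF eq2, of pr] by (simp add: pr_diff pr_scale prn)
    have devs: "dev \<sigma> = dev \<sigma>tr - (dl*B) *\<^sub>R n"
      using arg_cong[OF eq2, of dev] by (simp add: dev_diff dev_scale dev_tr0[OF trn])
    have dlpos: "dl > 0"
    proof (rule ccontr)
      assume "\<not> dl > 0" then have "dl = 0" using dl0 by simp
      then have "\<sigma> = \<sigma>tr" using eq2 by simp
      then show False using fle ftr by simp
    qed
    then have f0: "fhat m0 fc (pr \<sigma>) (rho \<sigma>) (rho_e e \<sigma>) = 0" using fdl by simp
    have s1: "pr \<sigma> = pr \<sigma>tr - dl * K * mg' Ag Bg fc ft (pr \<sigma>) / fc" using prs unfolding A_def by simp
    have dtr0: "dev \<sigma>tr = dev \<sigma> + (dl*B) *\<^sub>R n" using devs by simp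
    show "sysR K G m0 Ag Bg fc ft e \<sigma>tr (pr \<sigma>) (rho \<sigma>) dl"
    proof (cases "rho \<sigma> > 0")
      case True
      then have nd: "n = dev \<sigma> /\<^sub>R rho \<sigma>" using n by (simp add: subdiff_rho_def)
      define c where "c = 1 + dl*B / rho \<sigma>"
      have "dl*B / rho \<sigma> > 0" using dlpos Bpos True by simp
      then have cpos: "c > 0" unfolding c_def by simp
      have dtr: "dev \<sigma>tr = c *\<^sub>R dev \<sigma>" using dtr0 unfolding nd c_def
        by (simp add: scaleR_add_left divide_inverse)
      have rtr: "rho \<sigma>tr = c * rho \<sigma>" using dtr cpos by (simp add: rho_def)
      have cr: "c * rho \<sigma> = rho \<sigma> + dl*B" using True unfolding c_def by (simp add: distrib_right)
      have rtr2: "rho \<sigma>tr = rho \<sigma> + dl*B" using rtr cr by simp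
      have rtrpos: "rho \<sigma>tr > 0" using rtr cpos True by simp
      have "dev \<sigma> = (1/c) *\<^sub>R dev \<sigma>tr" using dtr cpos by simp
      then have th: "theta \<sigma> = theta \<sigma>tr" by (rule theta_scale) (use cpos in simp)
      have re: "rho_e e \<sigma> = rho \<sigma> * r_e e (cos (theta \<sigma>tr))" using True th by (simp add: rho_e_def)
      have "rho \<sigma>tr - dl * 2 * G * (3 * rho \<sigma> / fc\<^sup>2 + m0 / (sqrt 6 * fc)) = rho \<sigma>"
        using rtr2 unfolding B_def b_def by (simp add: mult.assoc)
      then have s2: "rho \<sigma> = pos_part (rho \<sigma>tr - dl * 2 * G * (3 * rho \<sigma> / fc\<^sup>2 + m0 / (sqrt 6 * fc)))"
        using True unfolding pos_part_def by simp
      show ?thesis unfolding sysR_def using s1 s2 f0 re rtrpos by simp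
    next
      case False
      then have r0: "rho \<sigma> = 0" using rho_nonneg[of \<sigma>] by simp
      then have nn: "norm n \<le> 1" using n by (simp add: subdiff_rho_def)
      have "dev \<sigma> = 0" using r0 by (simp add: rho_def)
      then have dtr: "dev \<sigma>tr = (dl*B) *\<^sub>R n" using dtr0 by simp
      have "rho \<sigma>tr = dl*B*norm n" using dtr dlpos Bpos by (simp add: rho_def)
      also have "\<dots> \<le> dl*B" using nn dlpos Bpos mult_left_mono[of "norm n" 1 "dl*B"] by simp
      finally have "rho \<sigma>tr - dl * 2 * G * (3 * rho \<sigma> / fc\<^sup>2 + m0 / (sqrt 6 * fc)) \<le> 0"
        unfolding B_def b_def by (simp add: mult.assoc)
      then have s2: "rho \<sigma> = pos_part (rho \<sigma>tr - dl * 2 * G * (3 * rho \<sigma> / fc\<^sup>2 + m0 / (sqrt 6 * fc)))"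
        using r0 unfolding pos_part_def by simp
      have re: "rho_e e \<sigma> = 0" using r0 by (simp add: rho_e_def)
      show ?thesis unfolding sysR_def using s1 s2 f0 re r0 by simp
    qed
  qed
  have P2: "\<forall>p r dl. sysR K G m0 Ag Bg fc ft e \<sigma>tr p r dl \<longrightarrow>
             probP K G m0 Ag Bg fc ft e \<sigma>tr
               (if rho \<sigma>tr > dl * 2 * G * (3 * r / fc\<^sup>2 + m0 / (sqrt 6 * fc))
                then p *\<^sub>R Id3 + r *\<^sub>R (dev \<sigma>tr /\<^sub>R rho \<sigma>tr)
                else p *\<^sub>R Id3) dl"
  proof (intro allI impI)
    fix p r dl assume R: "sysR K G m0 Ag Bg fc ft e \<sigma>tr p r dl"
    then have s1: "p = pr \<sigma>tr - dl * K * mg' Ag Bg fc ft p / fc"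
      and s2: "r = pos_part (rho \<sigma>tr - dl * 2 * G * (3 * r / fc\<^sup>2 + m0 / (sqrt 6 * fc)))"
      and s3: "fhat m0 fc p r (if rho \<sigma>tr > 0 then r * r_e e (cos (theta \<sigma>tr)) else 0) = 0"
      unfolding sysR_def by auto
    define B where "B = b r"
    define A where "A = K * mg' Ag Bg fc ft p / fc"
    have r0: "r \<ge> 0" using s2 by (simp add: pos_part_def)
    have Bpos: "B > 0" using bpos r0 B_def by auto
    have Apos: "A > 0" using mgpos assms(1,6) by (simp add: A_def)
    have s1': "p = pr \<sigma>tr - dl*A" using s1 unfolding A_def by simp
    have s2': "r = max 0 (rho \<sigma>tr - dl*B)" using s2 unfolding B_def b_def pos_part_def by (simp add: mult.assoc)
    have rtn: "rho \<sigma>tr \<ge> 0" by (rule rho_nonneg)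
    have dl0: "dl \<ge> 0"
    proof (rule ccontr)
      assume "\<not> dl \<ge> 0" then have neg: "dl < 0" by simp
      have "dl*A < 0" using neg Apos by (simp add: mult_neg_pos)
      then have pgt: "p > pr \<sigma>tr" using s1' by simp
      have "dl*B < 0" using neg Bpos by (simp add: mult_neg_pos)
      then have rgt: "r > rho \<sigma>tr" using s2' rtn by auto
      have a1: "(rho \<sigma>tr / fc)^2 < (r/fc)^2" using rgt rtn fc
        by (intro power_strict_mono) (auto simp: divide_strict_right_mono)
      have a3: "pr \<sigma>tr / fc < p / fc" using pgt fc by (simp add: divide_strict_right_mono)
      show False
      proof (cases "rho \<sigma>tr > 0")
        case True
        define q where "q = r_e e (cos (theta \<sigma>tr))"
        have re0: "q \<ge> 0" unfolding q_def by (rule re_tr_nonneg[OF assms(10) True assms(8,9)])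
        have a2: "rho \<sigma>tr * q / (sqrt 6 * fc) \<le> r * q / (sqrt 6 * fc)" using rgt re0 fc
          by (intro divide_right_mono mult_right_mono) auto
        have "m0 * (rho \<sigma>tr * q / (sqrt 6 * fc) + pr \<sigma>tr / fc) < m0 * (r * q / (sqrt 6 * fc) + p / fc)"
          using a2 a3 assms(3) by (intro mult_strict_left_mono) auto
        then have "fhat m0 fc (pr \<sigma>tr) (rho \<sigma>tr) (rho \<sigma>tr * q) < fhat m0 fc p r (r * q)"
          unfolding fhat_def using a1 by simp
        then show False using s3 ftr True unfolding q_def by (simp add: rho_e_def)
      next
        case False
        then have rt0: "rho \<sigma>tr = 0" using rtn by simp
        have "m0 * (0 / (sqrt 6 * fc) + pr \<sigma>tr / fc) < m0 * (0 / (sqrt 6 * fc) + p / fc)"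
          using a3 assms(3) by (intro mult_strict_left_mono) auto
        then have "fhat m0 fc (pr \<sigma>tr) (rho \<sigma>tr) 0 < fhat m0 fc p r 0"
          unfolding fhat_def using a1 by simp
        then show False using s3 ftr False by (simp add: rho_e_def)
      qed
    qed
    have dlB: "dl*B \<ge> 0" using dl0 Bpos by simp
    have cond: "(rho \<sigma>tr > dl * 2 * G * (3 * r / fc\<^sup>2 + m0 / (sqrt 6 * fc))) = (rho \<sigma>tr > dl*B)"
      unfolding B_def b_def by (simp add: mult.assoc)
    show "probP K G m0 Ag Bg fc ft e \<sigma>tr
               (if rho \<sigma>tr > dl * 2 * G * (3 * r / fc\<^sup>2 + m0 / (sqrt 6 * fc))
                then p *\<^sub>R Id3 + r *\<^sub>R (dev \<sigma>tr /\<^sub>R rho \<sigma>tr)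
                else p *\<^sub>R Id3) dl"
    proof (cases "rho \<sigma>tr > dl*B")
      case True
      have rtp: "rho \<sigma>tr > 0" using True dlB by linarith
      have rr: "r = rho \<sigma>tr - dl*B" and rpos: "r > 0" using s2' True by auto
      define ntr where "ntr = dev \<sigma>tr /\<^sub>R rho \<sigma>tr"
      define \<sigma> where "\<sigma> = p *\<^sub>R Id3 + r *\<^sub>R ntr"
      have \<sigma>eq: "(if rho \<sigma>tr > dl * 2 * G * (3 * r / fc\<^sup>2 + m0 / (sqrt 6 * fc))
                then p *\<^sub>R Id3 + r *\<^sub>R (dev \<sigma>tr /\<^sub>R rho \<sigma>tr)
                else p *\<^sub>R Id3) = \<sigma>" using True cond unfolding \<sigma>_def ntr_def by simp
      have trn: "Id3 \<bullet> ntr = 0" by (simp add: ntr_def tr_dev)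
      have prs: "pr \<sigma> = p" unfolding \<sigma>_def pr_add pr_scale using trn by (simp add: pr_def Id3_Id3)
      have devs: "dev \<sigma> = (r / rho \<sigma>tr) *\<^sub>R dev \<sigma>tr"
        by (simp add: \<sigma>_def dev_add dev_scale dev_tr0[OF trn] ntr_def divide_inverse)
      have "rho \<sigma> = \<bar>r / rho \<sigma>tr\<bar> * rho \<sigma>tr" unfolding rho_def devs by simp
      then have rhos: "rho \<sigma> = r" using rpos rtp by simp
      have th: "theta \<sigma> = theta \<sigma>tr" by (rule theta_scale[OF devs]) (use rpos rtp in simp)
      have sg: "sym3 \<sigma>" unfolding \<sigma>_def ntr_def
        by (intro sym3_add sym3_scale sym3_Id3 sym3_dev assms(10))
      have "dev \<sigma> /\<^sub>R rho \<sigma> = ntr" unfolding rhos devs ntr_def using rpos by (simp add: divide_inverse)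
      then have sub: "ntr \<in> subdiff_rho \<sigma>" using rhos rpos by (simp add: subdiff_rho_def)
      have \<sigma>tr_eq: "\<sigma>tr = pr \<sigma>tr *\<^sub>R Id3 + rho \<sigma>tr *\<^sub>R ntr"
        using decomp[of \<sigma>tr] rtp by (simp add: ntr_def)
      have eqP: "\<sigma> = \<sigma>tr - dl *\<^sub>R (K * mg' Ag Bg fc ft (pr \<sigma>) / fc) *\<^sub>R Id3
               - dl *\<^sub>R (2 * G * (3 * rho \<sigma> / fc\<^sup>2 + m0 / (sqrt 6 * fc))) *\<^sub>R ntr"
      proof -
        have e1: "dl *\<^sub>R (K * mg' Ag Bg fc ft (pr \<sigma>) / fc) *\<^sub>R Id3 = (dl*A) *\<^sub>R Id3" by (simp add: prs A_def)
        have e2: "dl *\<^sub>R (2 * G * (3 * rho \<sigma> / fc\<^sup>2 + m0 / (sqrt 6 * fc))) *\<^sub>R ntr = (dl*B) *\<^sub>R ntr"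
          by (simp add: rhos B_def b_def)
        have "\<sigma> = (pr \<sigma>tr - dl*A) *\<^sub>R Id3 + (rho \<sigma>tr - dl*B) *\<^sub>R ntr"
          unfolding \<sigma>_def using s1' rr by simp
        also have "\<dots> = \<sigma>tr - (dl*A) *\<^sub>R Id3 - (dl*B) *\<^sub>R ntr"
          by (subst \<sigma>tr_eq) (simp add: algebra_simps)
        finally show ?thesis unfolding e1 e2 .
      qed
      have re: "rho_e e \<sigma> = r * r_e e (cos (theta \<sigma>tr))" using rhos rpos th by (simp add: rho_e_def)
      have f0: "fhat m0 fc (pr \<sigma>) (rho \<sigma>) (rho_e e \<sigma>) = 0" using s3 rtp prs rhos re by simp
      show ?thesis unfolding \<sigma>eq probP_def using sg sub eqP dl0 f0 by auto
    next
      case False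
      have rz: "r = 0" using s2' False by auto
      define \<sigma> where "\<sigma> = p *\<^sub>R Id3"
      have \<sigma>eq: "(if rho \<sigma>tr > dl * 2 * G * (3 * r / fc\<^sup>2 + m0 / (sqrt 6 * fc))
                then p *\<^sub>R Id3 + r *\<^sub>R (dev \<sigma>tr /\<^sub>R rho \<sigma>tr)
                else p *\<^sub>R Id3) = \<sigma>" using False cond unfolding \<sigma>_def by simp
      have prs: "pr \<sigma> = p" by (simp add: \<sigma>_def pr_scale)
      have devs: "dev \<sigma> = 0" by (simp add: \<sigma>_def dev_scale)
      have rhos: "rho \<sigma> = 0" by (simp add: rho_def devs)
      have re: "rho_e e \<sigma> = 0" using rhos by (simp add: rho_e_def)
      have sg: "sym3 \<sigma>" unfolding \<sigma>_def by (intro sym3_scale sym3_Id3)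
      define cc where "cc = (if rho \<sigma>tr > 0 then 1/(dl*B) else 0)"
      define n where "n = cc *\<^sub>R dev \<sigma>tr"
      have dtr: "dev \<sigma>tr = (dl*B) *\<^sub>R n"
      proof (cases "rho \<sigma>tr > 0")
        case True
        then have "dl*B > 0" using False by simp
        then have "dl \<noteq> 0" "B \<noteq> 0" by auto
        then show ?thesis using True by (simp add: n_def cc_def)
      next
        case False
        then have "rho \<sigma>tr = 0" using rtn by simp
        then have "dev \<sigma>tr = 0" by (simp add: rho_def)
        then show ?thesis by (simp add: n_def)
      qed
      have nn: "norm n \<le> 1"
      proof (cases "rho \<sigma>tr > 0")
        case True
        then have dB: "dl*B > 0" using False by simp
        have "norm n = rho \<sigma>tr / (dl*B)" using True dB by (simp add: n_def cc_def rho_def)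
        also have "\<dots> \<le> 1" using False dB by simp
        finally show ?thesis .
      next
        case False then show ?thesis by (simp add: n_def cc_def)
      qed
      have sub: "n \<in> subdiff_rho \<sigma>" using rhos nn
        by (simp add: subdiff_rho_def n_def tr_dev sym3_scale sym3_dev assms(10))
      have eqP: "\<sigma> = \<sigma>tr - dl *\<^sub>R (K * mg' Ag Bg fc ft (pr \<sigma>) / fc) *\<^sub>R Id3
               - dl *\<^sub>R (2 * G * (3 * rho \<sigma> / fc\<^sup>2 + m0 / (sqrt 6 * fc))) *\<^sub>R n"
      proof -
        have e1: "dl *\<^sub>R (K * mg' Ag Bg fc ft (pr \<sigma>) / fc) *\<^sub>R Id3 = (dl*A) *\<^sub>R Id3" by (simp add: prs A_def)
        have e2: "dl *\<^sub>R (2 * G * (3 * rho \<sigma> / fc\<^sup>2 + m0 / (sqrt 6 * fc))) *\<^sub>R n = (dl*B) *\<^sub>R n"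
          by (simp add: rhos rz B_def b_def)
        have e: "\<sigma>tr = pr \<sigma>tr *\<^sub>R Id3 + (dl*B) *\<^sub>R n"
          using decomp[of \<sigma>tr] unfolding dtr[symmetric] .
        then have "\<sigma>tr - (dl*A) *\<^sub>R Id3 - (dl*B) *\<^sub>R n
             = (pr \<sigma>tr *\<^sub>R Id3 + (dl*B) *\<^sub>R n) - (dl*A) *\<^sub>R Id3 - (dl*B) *\<^sub>R n"
          by (rule arg_cong[where f="\<lambda>z. z - (dl*A) *\<^sub>R Id3 - (dl*B) *\<^sub>R n"])
        also have "\<dots> = (pr \<sigma>tr - dl*A) *\<^sub>R Id3" by (simp add: algebra_simps)
        finally have "\<sigma>tr - (dl*A) *\<^sub>R Id3 - (dl*B) *\<^sub>R n = (pr \<sigma>tr - dl*A) *\<^sub>R Id3" .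
        moreover have "\<sigma> = (pr \<sigma>tr - dl*A) *\<^sub>R Id3" using s1' by (simp add: \<sigma>_def)
        ultimately show ?thesis unfolding e1 e2 by simp
      qed
      have "fhat m0 fc p 0 0 = 0" using s3 unfolding rz by (cases "rho \<sigma>tr > 0") simp_all
      then have f0: "fhat m0 fc (pr \<sigma>) (rho \<sigma>) (rho_e e \<sigma>) = 0" using prs rhos re by simp
      show ?thesis unfolding \<sigma>eq probP_def using sg sub eqP dl0 f0 by auto
    qed
  qed
  show ?thesis using P1 P2 by blast
qed
end
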